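(* Let $(M,g,S)$, $p$, $u$, $\varphi$, $\beta_3$ and $e_1,e_2$ be as in the context. Give each $v\in\beta_3$ coordinates $(x,y)$ by $v=xe_1+ye_2$. For $a\in\mathbb R$, the circle $k_3=\{v\in\beta_3:\tilde g(v,v)=a\}$ has the equation $$\frac{2\cos\varphi-1}{1-\cos\varphi}\,x^2+\frac{2\cos\varphi+1}{1+\cos\varphi}\,y^2=a.$$
   Context: $M$ is a 4-dimensional differentiable manifold with a positive definite metric $g$ and a tensor field $S$ of type $(1,1)$ whose components in some local coordinate system form the matrix with rows $(0,1,0,0)$, $(0,0,1,0)$, $(0,0,0,1)$, $(-1,0,0,0)$; hence $S^4=-\mathrm{id}$, and $g(Su,Sv)=g(u,v)$ for all vector fields $u,v$. The associated metric is $\tilde g(u,v)=g(u,Sv)+g(Su,v)$. Here $p\in M$, $u\in T_pM$ is a $g$-unit vector such that $\{u,Su,S^2u,S^3u\}$ is a basis of $T_pM$, $\varphi=\angle(u,Su)$ with respect to $g$ (so $\cos\varphi=g(u,Su)$; known: $\frac{\pi}{4}<\varphi<\frac{3\pi}{4}$), $\beta_3=\mathrm{span}\{u,S^3u\}$, and $e_1=\frac{1}{\sqrt{2(1-\cos\varphi)}}(u+S^3u)$, $e_2=\frac{1}{\sqrt{2(1+\cos\varphi)}}(-u+S^3u)$ (a $g$-orthonormal basis of $\beta_3$). *)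

theory Defs
  imports "HOL-Analysis.Analysis"
begin

text \<open>Tangent space T_pM is modelled as real^4 (components in the given local
coordinate system). The structure S has, in these coordinates, the matrix with
rows (0,1,0,0),(0,0,1,0),(0,0,0,1),(-1,0,0,0).\<close>

definition Smat :: "real^4^4" where
  "Smat = vector [vector [0,1,0,0], vector [0,0,1,0], vector [0,0,0,1], vector [-1,0,0,0]]"

definition Sop :: "real^4 \<Rightarrow> real^4" where
  "Sop v = Smat *v v"

definition gmet :: "real^4^4 \<Rightarrow> real^4 \<Rightarrow> real^4 \<Rightarrow> real" where
  "gmet G v w = v \<bullet> (G *v w)"

definition gtilde :: "real^4^4 \<Rightarrow> real^4 \<Rightarrow> real^4 \<Rightarrow> real" where
  "gtilde G v w = gmet G v (Sop w) + gmet G (Sop v) w"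

end

theory Submission
  imports Defs
begin

lemma vector_4 [simp]:
 "(vector [x,y,z,t] ::('a::zero)^4)$1 = x"
 "(vector [x,y,z,t] ::('a::zero)^4)$2 = y"
 "(vector [x,y,z,t] ::('a::zero)^4)$3 = z"
 "(vector [x,y,z,t] ::('a::zero)^4)$4 = t"
  unfolding vector_def by simp_all

lemma Sop_add: "Sop (a + b) = Sop a + Sop b"
  by (simp add: Sop_def matrix_vector_right_distrib)
lemma Sop_scale: "Sop (r *\<^sub>R a) = r *\<^sub>R Sop a"
  by (simp add: Sop_def matrix_vector_mult_scaleR)
lemma Sop_neg: "Sop (- a) = - Sop a"
  using Sop_scale[of "-1" a] by simp
lemma Sop4: "Sop (Sop (Sop (Sop v))) = - v"
  unfolding Sop_def Smat_def
  by (simp add: vec_eq_iff forall_4 matrix_vector_mult_def sum_4 vector_4)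

lemma g_addL: "gmet G (a + b) w = gmet G a w + gmet G b w"
  by (simp add: gmet_def inner_add_left)
lemma g_addR: "gmet G w (a + b) = gmet G w a + gmet G w b"
  by (simp add: gmet_def matrix_vector_right_distrib inner_add_right)
lemma g_scaleL: "gmet G (r *\<^sub>R a) w = r * gmet G a w"
  by (simp add: gmet_def)
lemma g_scaleR: "gmet G w (r *\<^sub>R a) = r * gmet G w a"
  by (simp add: gmet_def matrix_vector_mult_scaleR)
lemma g_negL: "gmet G (- a) w = - gmet G a w"
  by (simp add: gmet_def)
lemma g_negR: "gmet G w (- a) = - gmet G w a"
  using g_scaleR[of G w "-1" a] by simp
lemma g_diffR: "gmet G w (a - b) = gmet G w a - gmet G w b"
  by (simp add: gmet_def matrix_vector_mult_diff_distrib inner_diff_right)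
lemma g_sym: "transpose G = G \<Longrightarrow> gmet G v w = gmet G w v"
  unfolding gmet_def
  by (metis dot_lmul_matrix inner_commute vector_transpose_matrix)

theorem theorem5p9:
  fixes G :: "real^4^4" and u :: "real^4" and \<phi> :: real
  assumes G_sym: "transpose G = G"
    and G_pos: "\<forall>v. v \<noteq> 0 \<longrightarrow> gmet G v v > 0"
    and S_isom: "\<forall>v w. gmet G (Sop v) (Sop w) = gmet G v w"
    and u_unit: "gmet G u u = 1"
    and u_basis: "independent {u, Sop u, Sop (Sop u), Sop (Sop (Sop u))}"
    and u_card: "card {u, Sop u, Sop (Sop u), Sop (Sop (Sop u))} = 4"
    and phi_angle: "0 \<le> \<phi> \<and> \<phi> \<le> pi \<and> cos \<phi> = gmet G u (Sop u)"
    and phi_range: "pi / 4 < \<phi> \<and> \<phi> < 3 * pi / 4"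
  shows "\<forall>a x y.
    (let e1 = (1 / sqrt (2 * (1 - cos \<phi>))) *\<^sub>R (u + Sop (Sop (Sop u)));
         e2 = (1 / sqrt (2 * (1 + cos \<phi>))) *\<^sub>R (- u + Sop (Sop (Sop u)));
         v = x *\<^sub>R e1 + y *\<^sub>R e2
     in gtilde G v v = a \<longleftrightarrow>
        (2 * cos \<phi> - 1) / (1 - cos \<phi>) * x\<^sup>2 + (2 * cos \<phi> + 1) / (1 + cos \<phi>) * y\<^sup>2 = a)"
proof (intro allI)
  fix a x y :: real
  define c where "c = cos \<phi>"
  have c1: "c < 1" unfolding c_def
    proof -
    have "0 < \<phi>" using phi_range pi_gt_zero by linarith
    then have "cos \<phi> < cos 0" using cos_monotone_0_pi[of 0 \<phi>] phi_angle by simp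
    then show "cos \<phi> < 1" by simp
  qed
  have c2: "-1 < c" unfolding c_def
    proof -
    have "\<phi> < pi" using phi_range pi_gt_zero by linarith
    then have "cos pi < cos \<phi>" using cos_monotone_0_pi[of \<phi> pi] phi_angle by simp
    then show "-1 < cos \<phi>" by simp
  qed
  define w where "w = Sop (Sop (Sop u))"
  have Sw: "Sop w = - u" unfolding w_def by (rule Sop4)
  have gc: "gmet G u (Sop u) = c" using phi_angle c_def by simp
  have d0: "gmet G u (Sop (Sop u)) = 0"
  proof -
    have "gmet G (Sop (Sop u)) u = gmet G (Sop (Sop (Sop u))) (Sop u)"
      using S_isom by metis
    also have "\<dots> = gmet G (Sop (Sop (Sop (Sop u)))) (Sop (Sop u))"
      using S_isom by metis
    also have "\<dots> = - gmet G u (Sop (Sop u))"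
      by (simp add: Sop4 g_negL)
    finally show ?thesis using g_sym[OF G_sym, of "Sop (Sop u)" u] by simp
  qed
  have gwSu: "gmet G w (Sop u) = 0"
    using S_isom d0 g_sym[OF G_sym] unfolding w_def by metis
  have gwu: "gmet G w u = - c"
  proof -
    have "gmet G w u = gmet G (Sop w) (Sop u)" using S_isom by simp
    also have "\<dots> = - c" using Sw g_negL gc by simp
    finally show ?thesis .
  qed
  define s1 where "s1 = sqrt (2 * (1 - c))"
  define s2 where "s2 = sqrt (2 * (1 + c))"
  have s1p: "s1 > 0" and s1s: "s1^2 = 2*(1-c)" using c1 unfolding s1_def by auto
  have s2p: "s2 > 0" and s2s: "s2^2 = 2*(1+c)" using c2 unfolding s2_def by auto
  define A where "A = x / s1 - y / s2"
  define B where "B = x / s1 + y / s2"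
  have v: "x *\<^sub>R ((1 / s1) *\<^sub>R (u + w)) + y *\<^sub>R ((1 / s2) *\<^sub>R (- u + w)) = A *\<^sub>R u + B *\<^sub>R w"
    unfolding A_def B_def by (simp add: algebra_simps)
  have Sv: "Sop (A *\<^sub>R u + B *\<^sub>R w) = A *\<^sub>R Sop u - B *\<^sub>R u"
    by (simp add: Sop_add Sop_scale Sw)
  have gt: "gtilde G (A *\<^sub>R u + B *\<^sub>R w) (A *\<^sub>R u + B *\<^sub>R w) = 2 * (c * (A^2 + B^2) - A * B)"
  proof -
    have e: "gmet G (A *\<^sub>R u + B *\<^sub>R w) (A *\<^sub>R Sop u - B *\<^sub>R u) = c * (A^2 + B^2) - A * B"
      by (simp add: g_addL g_addR g_scaleL g_scaleR g_negR g_diffR gc gwSu gwu u_unit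
          algebra_simps power2_eq_square)
    show ?thesis unfolding gtilde_def Sv using e g_sym[OF G_sym] by simp
  qed
  have fin: "2 * (c * (A^2 + B^2) - A * B) =
     (2 * c - 1) / (1 - c) * x\<^sup>2 + (2 * c + 1) / (1 + c) * y\<^sup>2"
  proof -
    have "2 * (c * (A^2 + B^2) - A * B) = (4*c - 2) * x^2 / s1^2 + (4*c+2) * y^2 / s2^2"
      unfolding A_def B_def using s1p s2p by (simp add: field_simps power2_eq_square)
    also have "\<dots> = (2 * c - 1) / (1 - c) * x\<^sup>2 + (2 * c + 1) / (1 + c) * y\<^sup>2"
    proof -
      have "1 - c \<noteq> 0" "1 + c \<noteq> 0" using c1 c2 by auto
      then have "(4*c - 2) * x^2 / (2*(1-c)) = (2 * c - 1) / (1 - c) * x\<^sup>2"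
        and "(4*c + 2) * y^2 / (2*(1+c)) = (2 * c + 1) / (1 + c) * y\<^sup>2"
        by (simp_all add: field_simps)
      then show ?thesis unfolding s1s s2s by simp
    qed
    finally show ?thesis .
  qed
  show "let e1 = (1 / sqrt (2 * (1 - cos \<phi>))) *\<^sub>R (u + Sop (Sop (Sop u)));
         e2 = (1 / sqrt (2 * (1 + cos \<phi>))) *\<^sub>R (- u + Sop (Sop (Sop u)));
         v = x *\<^sub>R e1 + y *\<^sub>R e2
     in gtilde G v v = a \<longleftrightarrow>
        (2 * cos \<phi> - 1) / (1 - cos \<phi>) * x\<^sup>2 + (2 * cos \<phi> + 1) / (1 + cos \<phi>) * y\<^sup>2 = a"
    unfolding Let_def c_def[symmetric] w_def[symmetric] s1_def[symmetric] s2_def[symmetric] v gt fin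
    by simp
qed

end
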